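(* Let $X$ be a uniformly locally finite metric space and let $h$ and $k$ be admissible operators on $\ell_2(X)$. Then: (a) $\|h-k\|=\|(h-k)\restriction_{c_{00}(X)}\|$, where $h-k$ is defined on $\mathrm{dom}(h)\cap\mathrm{dom}(k)$ and norms are possibly infinite; (b) if $h-k$ is bounded on $c_{00}(X)$, then $\mathrm{dom}(h)=\mathrm{dom}(k)$.
   Context: $(\delta_x)$ is the canonical basis of $\ell_2(X)$ and $c_{00}(X)$ the space of finitely supported vectors. An operator $h$ on $\ell_2(X)$ (a possibly unbounded linear map on a subspace $\mathrm{dom}(h)$) is admissible if it is closed, $c_{00}(X)\subseteq\mathrm{dom}(h)$, and $h\xi=\sum_{y\in X}\langle\xi,\delta_y\rangle h\delta_y$ for all $\xi\in\mathrm{dom}(h)$. For an operator $h$, $\|h\|=\sup\{\|h\xi\|:\xi\in\mathrm{dom}(h),\|\xi\|\le1\}\in[0,\infty]$. *)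

theory Defs
  imports "HOL-Analysis.Analysis"
begin

text \<open>The space X is modelled as a type 'a of class metric_space (X = UNIV).
  Vectors of l2(X) are functions 'a => complex that are square summable.\<close>

definition unif_locally_finite :: "'a::metric_space itself \<Rightarrow> bool" where
  "unif_locally_finite _ \<longleftrightarrow>
     (\<forall>r::real. \<exists>N::nat. \<forall>x::'a. finite (cball x r) \<and> card (cball x r) \<le> N)"

definition l2 :: "('a \<Rightarrow> complex) set" where
  "l2 = {f. (\<lambda>x. (cmod (f x))\<^sup>2) summable_on UNIV}"

definition l2norm :: "('a \<Rightarrow> complex) \<Rightarrow> real" where
  "l2norm f = sqrt (infsum (\<lambda>x. (cmod (f x))\<^sup>2) UNIV)"

definition delta :: "'a \<Rightarrow> 'a \<Rightarrow> complex" where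
  "delta y = (\<lambda>x. if x = y then 1 else 0)"

definition c00 :: "('a \<Rightarrow> complex) set" where
  "c00 = {f. finite {x. f x \<noteq> 0}}"

definition is_operator :: "('a \<Rightarrow> complex) set \<Rightarrow> (('a \<Rightarrow> complex) \<Rightarrow> ('a \<Rightarrow> complex)) \<Rightarrow> bool" where
  "is_operator D h \<longleftrightarrow>
     D \<subseteq> l2 \<and> (\<lambda>x. 0) \<in> D \<and>
     (\<forall>\<xi>\<in>D. \<forall>\<eta>\<in>D. (\<lambda>x. \<xi> x + \<eta> x) \<in> D \<and> h (\<lambda>x. \<xi> x + \<eta> x) = (\<lambda>x. h \<xi> x + h \<eta> x)) \<and>
     (\<forall>\<xi>\<in>D. \<forall>c::complex. (\<lambda>x. c * \<xi> x) \<in> D \<and> h (\<lambda>x. c * \<xi> x) = (\<lambda>x. c * h \<xi> x)) \<and>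
     (\<forall>\<xi>\<in>D. h \<xi> \<in> l2)"

definition closed_operator :: "('a \<Rightarrow> complex) set \<Rightarrow> (('a \<Rightarrow> complex) \<Rightarrow> ('a \<Rightarrow> complex)) \<Rightarrow> bool" where
  "closed_operator D h \<longleftrightarrow>
     (\<forall>s \<xi> \<eta>. (\<forall>n. s n \<in> D) \<and> \<xi> \<in> l2 \<and> \<eta> \<in> l2 \<and>
        (\<lambda>n. l2norm (\<lambda>x. s n x - \<xi> x)) \<longlonglongrightarrow> 0 \<and>
        (\<lambda>n. l2norm (\<lambda>x. h (s n) x - \<eta> x)) \<longlonglongrightarrow> 0
      \<longrightarrow> \<xi> \<in> D \<and> h \<xi> = \<eta>)"

text \<open>Admissible: closed operator, c00 in the domain, and
  h xi = sum_y <xi, delta_y> h delta_y (unconditional convergence in l2 norm;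
  note <xi, delta_y> = xi y).\<close>
definition admissible :: "('a \<Rightarrow> complex) set \<Rightarrow> (('a \<Rightarrow> complex) \<Rightarrow> ('a \<Rightarrow> complex)) \<Rightarrow> bool" where
  "admissible D h \<longleftrightarrow>
     is_operator D h \<and> closed_operator D h \<and> c00 \<subseteq> D \<and>
     (\<forall>\<xi>\<in>D. ((\<lambda>F. l2norm (\<lambda>x. (\<Sum>y\<in>F. \<xi> y * h (delta y) x) - h \<xi> x)) \<longlongrightarrow> 0)
                 (finite_subsets_at_top UNIV))"

definition opnorm :: "('a \<Rightarrow> complex) set \<Rightarrow> (('a \<Rightarrow> complex) \<Rightarrow> ('a \<Rightarrow> complex)) \<Rightarrow> ereal" where
  "opnorm D h = Sup {ereal (l2norm (h \<xi>)) | \<xi>. \<xi> \<in> D \<and> l2norm \<xi> \<le> 1}"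

end

theory Submission
  imports Defs
begin


lemma l2norm_nonneg: "l2norm f \<ge> 0"
  unfolding l2norm_def by (simp add: infsum_nonneg)

lemma l2_fin_le:
  assumes "f \<in> l2" "finite A"
  shows "(\<Sum>x\<in>A. (cmod (f x))\<^sup>2) \<le> (l2norm f)\<^sup>2"
proof -
  have s: "(\<lambda>x. (cmod (f x))\<^sup>2) summable_on UNIV" using assms(1) by (simp add: l2_def)
  have "(\<Sum>x\<in>A. (cmod (f x))\<^sup>2) \<le> infsum (\<lambda>x. (cmod (f x))\<^sup>2) UNIV"
    by (rule finite_sum_le_infsum[OF s assms(2)]) auto
  also have "\<dots> = (l2norm f)\<^sup>2" unfolding l2norm_def by (simp add: infsum_nonneg)
  finally show ?thesis .
qed

lemma l2_bound:
  assumes "\<And>A. finite A \<Longrightarrow> (\<Sum>x\<in>A. (cmod (f x))\<^sup>2) \<le> C\<^sup>2" "0 \<le> C"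
  shows "f \<in> l2 \<and> l2norm f \<le> C"
proof -
  have s: "(\<lambda>x. (cmod (f x))\<^sup>2) summable_on UNIV"
    by (rule nonneg_bdd_above_summable_on) (use assms in \<open>auto intro!: bdd_aboveI\<close>)
  have "infsum (\<lambda>x. (cmod (f x))\<^sup>2) UNIV \<le> C\<^sup>2"
    by (rule infsum_le_finite_sums[OF s]) (use assms in auto)
  then have "l2norm f \<le> sqrt (C\<^sup>2)" unfolding l2norm_def by (rule real_sqrt_le_mono)
  with s assms(2) show ?thesis by (simp add: l2_def)
qed

lemma l2_pt: "f \<in> l2 \<Longrightarrow> cmod (f x) \<le> l2norm f"
  using l2_fin_le[of f "{x}"] l2norm_nonneg[of f]
  by (simp add: abs_le_square_iff power2_le_iff_abs_le)

lemma l2_zero: "(\<lambda>x::'a. 0) \<in> l2 \<and> l2norm (\<lambda>x::'a. 0) = 0"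
proof -
  have "(\<lambda>x::'a. 0) \<in> l2 \<and> l2norm (\<lambda>x::'a. 0) \<le> 0" by (rule l2_bound) auto
  then show ?thesis using l2norm_nonneg[of "\<lambda>x::'a. 0"] by (meson antisym)
qed

lemma l2_add:
  assumes "f \<in> l2" "g \<in> l2"
  shows "(\<lambda>x. f x + g x) \<in> l2 \<and> l2norm (\<lambda>x. f x + g x) \<le> l2norm f + l2norm g"
proof (rule l2_bound)
  fix A :: "'a set" assume A: "finite A"
  have "L2_set (\<lambda>x. cmod (f x + g x)) A \<le> L2_set (\<lambda>x. cmod (f x) + cmod (g x)) A"
    by (rule L2_set_mono) (auto simp: norm_triangle_ineq)
  also have "\<dots> \<le> L2_set (\<lambda>x. cmod (f x)) A + L2_set (\<lambda>x. cmod (g x)) A"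
    by (rule L2_set_triangle_ineq)
  also have "L2_set (\<lambda>x. cmod (f x)) A \<le> l2norm f"
    unfolding L2_set_def using l2_fin_le[OF assms(1) A] l2norm_nonneg[of f]
    by (intro real_le_lsqrt) auto
  also have "L2_set (\<lambda>x. cmod (g x)) A \<le> l2norm g"
    unfolding L2_set_def using l2_fin_le[OF assms(2) A] l2norm_nonneg[of g]
    by (intro real_le_lsqrt) auto
  finally have "sqrt (\<Sum>x\<in>A. (cmod (f x + g x))\<^sup>2) \<le> l2norm f + l2norm g"
    unfolding L2_set_def by simp
  then show "(\<Sum>x\<in>A. (cmod (f x + g x))\<^sup>2) \<le> (l2norm f + l2norm g)\<^sup>2"
    by (rule sqrt_le_D)
next
  show "0 \<le> l2norm f + l2norm g" by (simp add: l2norm_nonneg add_nonneg_nonneg)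
qed

lemma l2_scale:
  assumes "f \<in> l2"
  shows "(\<lambda>x. c * f x) \<in> l2 \<and> l2norm (\<lambda>x. c * f x) = cmod c * l2norm f"
proof -
  have e: "(\<lambda>x. (cmod (c * f x))\<^sup>2) = (\<lambda>x. (cmod c)\<^sup>2 * (cmod (f x))\<^sup>2)"
    by (simp add: norm_mult power_mult_distrib)
  have "(\<lambda>x. (cmod c)\<^sup>2 * (cmod (f x))\<^sup>2) summable_on UNIV"
    using assms by (intro summable_on_cmult_right) (simp add: l2_def)
  moreover have "l2norm (\<lambda>x. c * f x) = cmod c * l2norm f"
    unfolding l2norm_def e infsum_cmult_right' by (simp add: real_sqrt_mult)
  ultimately show ?thesis by (simp add: l2_def e)
qed

lemma l2_diff:
  assumes "f \<in> l2" "g \<in> l2"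
  shows "(\<lambda>x. f x - g x) \<in> l2"
  using l2_add[OF assms(1) l2_scale[OF assms(2), of "-1", THEN conjunct1]] by simp

lemma l2norm_commute: "l2norm (\<lambda>x. f x - g x) = l2norm (\<lambda>x. g x - f x)"
  unfolding l2norm_def by (simp add: norm_minus_commute)

lemma l2_tri:
  assumes "f \<in> l2" "g \<in> l2" "m \<in> l2"
  shows "l2norm (\<lambda>x. f x - g x) \<le> l2norm (\<lambda>x. f x - m x) + l2norm (\<lambda>x. m x - g x)"
  using l2_add[OF l2_diff[OF assms(1,3)] l2_diff[OF assms(3,2)]] by simp

lemma l2_complete:
  fixes f :: "nat \<Rightarrow> 'a \<Rightarrow> complex"
  assumes fl: "\<And>n. f n \<in> l2"
    and C: "\<And>e. e > 0 \<Longrightarrow> \<exists>N. \<forall>m\<ge>N. \<forall>n\<ge>N. l2norm (\<lambda>x. f m x - f n x) < e"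
  shows "\<exists>\<eta>\<in>l2. (\<lambda>n. l2norm (\<lambda>x. f n x - \<eta> x)) \<longlonglongrightarrow> 0"
proof -
  have "Cauchy (\<lambda>n. f n x)" for x
  proof (rule metric_CauchyI)
    fix e :: real assume "e > 0"
    then obtain N where N: "\<forall>m\<ge>N. \<forall>n\<ge>N. l2norm (\<lambda>x. f m x - f n x) < e" using C by blast
    show "\<exists>M. \<forall>m\<ge>M. \<forall>n\<ge>M. dist (f m x) (f n x) < e"
    proof (intro exI allI impI)
      fix m n assume "m \<ge> N" "n \<ge> N"
      then have "l2norm (\<lambda>x. f m x - f n x) < e" using N by blast
      moreover have "cmod (f m x - f n x) \<le> l2norm (\<lambda>x. f m x - f n x)"
        using l2_pt[OF l2_diff[OF fl[of m] fl[of n]], of x] by simp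
      ultimately show "dist (f m x) (f n x) < e" by (simp add: dist_norm)
    qed
  qed
  then have "\<forall>x. \<exists>L. (\<lambda>n. f n x) \<longlonglongrightarrow> L"
    using Cauchy_convergent_iff convergent_def by blast
  then have "\<exists>\<eta>. \<forall>x. (\<lambda>n. f n x) \<longlonglongrightarrow> \<eta> x" by (rule choice)
  then obtain \<eta> where eta: "\<And>x. (\<lambda>n. f n x) \<longlonglongrightarrow> \<eta> x" by blast
  have key: "(\<lambda>x. f n x - \<eta> x) \<in> l2 \<and> l2norm (\<lambda>x. f n x - \<eta> x) \<le> e"
    if N: "\<forall>m\<ge>N. \<forall>n\<ge>N. l2norm (\<lambda>x. f m x - f n x) < e" and nN: "n \<ge> N" and e: "e > 0" for N n e
  proof (rule l2_bound)
    fix A :: "'a set" assume A: "finite A"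
    have lim: "(\<lambda>m. \<Sum>x\<in>A. (cmod (f n x - f m x))\<^sup>2) \<longlonglongrightarrow> (\<Sum>x\<in>A. (cmod (f n x - \<eta> x))\<^sup>2)"
      by (intro tendsto_intros eta)
    have "\<forall>\<^sub>F m in sequentially. (\<Sum>x\<in>A. (cmod (f n x - f m x))\<^sup>2) \<le> e\<^sup>2"
    proof (rule eventually_sequentiallyI[of N])
      fix m assume "m \<ge> N"
      then have "l2norm (\<lambda>x. f n x - f m x) < e" using N nN by blast
      then have "(l2norm (\<lambda>x. f n x - f m x))\<^sup>2 \<le> e\<^sup>2"
        using l2norm_nonneg by (intro power_mono) auto
      then show "(\<Sum>x\<in>A. (cmod (f n x - f m x))\<^sup>2) \<le> e\<^sup>2"
        using l2_fin_le[OF l2_diff[OF fl[of n] fl[of m]] A] by linarith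
    qed
    then show "(\<Sum>x\<in>A. (cmod (f n x - \<eta> x))\<^sup>2) \<le> e\<^sup>2"
      by (rule tendsto_upperbound[OF lim]) simp
  qed (use e in auto)
  obtain N1 where N1: "\<forall>m\<ge>N1. \<forall>n\<ge>N1. l2norm (\<lambda>x. f m x - f n x) < 1" using C[of 1] by auto
  have "(\<lambda>x. f N1 x - \<eta> x) \<in> l2" using key[OF N1 order_refl] by simp
  from l2_diff[OF fl[of N1] this] have etal2: "\<eta> \<in> l2" by simp
  have "(\<lambda>n. l2norm (\<lambda>x. f n x - \<eta> x)) \<longlonglongrightarrow> 0"
  proof (rule LIMSEQ_I)
    fix r :: real assume r: "r > 0"
    then obtain N where N: "\<forall>m\<ge>N. \<forall>n\<ge>N. l2norm (\<lambda>x. f m x - f n x) < r/2" using C[of "r/2"] by auto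
    show "\<exists>no. \<forall>n\<ge>no. norm (l2norm (\<lambda>x. f n x - \<eta> x) - 0) < r"
    proof (intro exI[of _ N] allI impI)
      fix n assume "n \<ge> N"
      then have "l2norm (\<lambda>x. f n x - \<eta> x) \<le> r/2" using key[OF N] r by auto
      then show "norm (l2norm (\<lambda>x. f n x - \<eta> x) - 0) < r"
        using l2norm_nonneg[of "\<lambda>x. f n x - \<eta> x"] r by simp
    qed
  qed
  with etal2 show ?thesis by blast
qed



lemma op_basic:
  assumes "is_operator D h"
  shows "D \<subseteq> l2" "\<And>\<xi>. \<xi> \<in> D \<Longrightarrow> h \<xi> \<in> l2"
    "\<And>\<xi> \<eta>. \<xi> \<in> D \<Longrightarrow> \<eta> \<in> D \<Longrightarrow> (\<lambda>x. \<xi> x + \<eta> x) \<in> D \<and> h (\<lambda>x. \<xi> x + \<eta> x) = (\<lambda>x. h \<xi> x + h \<eta> x)"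
    "\<And>\<xi> c. \<xi> \<in> D \<Longrightarrow> (\<lambda>x. c * \<xi> x) \<in> D \<and> h (\<lambda>x. c * \<xi> x) = (\<lambda>x. c * h \<xi> x)"
    "(\<lambda>x. 0) \<in> D"
  using assms unfolding is_operator_def by auto

lemma op_zero:
  assumes "is_operator D h"
  shows "h (\<lambda>x. 0) = (\<lambda>x. 0)"
  using op_basic(4)[OF assms op_basic(5)[OF assms], of 0] by simp

lemma op_diff:
  assumes "is_operator D h" "\<xi> \<in> D" "\<eta> \<in> D"
  shows "(\<lambda>x. \<xi> x - \<eta> x) \<in> D \<and> h (\<lambda>x. \<xi> x - \<eta> x) = (\<lambda>x. h \<xi> x - h \<eta> x)"
proof -
  have s: "(\<lambda>x. (-1) * \<eta> x) \<in> D \<and> h (\<lambda>x. (-1) * \<eta> x) = (\<lambda>x. (-1) * h \<eta> x)"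
    using op_basic(4)[OF assms(1,3)] by blast
  have "(\<lambda>x. \<xi> x + (-1) * \<eta> x) \<in> D \<and> h (\<lambda>x. \<xi> x + (-1) * \<eta> x) = (\<lambda>x. h \<xi> x + h (\<lambda>x. (-1) * \<eta> x) x)"
    using op_basic(3)[OF assms(1,2) s[THEN conjunct1]] by simp
  with s show ?thesis by simp
qed

lemma op_sum:
  assumes "is_operator D h" "finite F" "\<And>y. y \<in> F \<Longrightarrow> g y \<in> D"
  shows "(\<lambda>x. \<Sum>y\<in>F. g y x) \<in> D \<and> h (\<lambda>x. \<Sum>y\<in>F. g y x) = (\<lambda>x. \<Sum>y\<in>F. h (g y) x)"
  using assms(2,3)
proof (induction F rule: finite_induct)
  case empty
  then show ?case using op_zero[OF assms(1)] op_basic(5)[OF assms(1)] by simp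
next
  case (insert a F)
  then have IH: "(\<lambda>x. \<Sum>y\<in>F. g y x) \<in> D \<and> h (\<lambda>x. \<Sum>y\<in>F. g y x) = (\<lambda>x. \<Sum>y\<in>F. h (g y) x)"
    and ga: "g a \<in> D" by auto
  have e: "(\<lambda>x. \<Sum>y\<in>insert a F. g y x) = (\<lambda>x. g a x + (\<Sum>y\<in>F. g y x))"
    using insert by simp
  show ?case unfolding e using op_basic(3)[OF assms(1) ga IH[THEN conjunct1]] IH insert by simp
qed

definition T :: "'a set \<Rightarrow> ('a \<Rightarrow> complex) \<Rightarrow> ('a \<Rightarrow> complex)" where
  "T F \<xi> = (\<lambda>x. \<Sum>y\<in>F. \<xi> y * delta y x)"

lemma T_eq: "finite F \<Longrightarrow> T F \<xi> x = (if x \<in> F then \<xi> x else 0)"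
  unfolding T_def delta_def by (simp add: if_distrib[of "\<lambda>t. _ * t"] cong: if_cong)

lemma T_c00: "finite F \<Longrightarrow> T F \<xi> \<in> c00"
  unfolding c00_def mem_Collect_eq by (rule finite_subset[of _ F]) (auto simp: T_eq split: if_splits)

lemma delta_c00: "delta y \<in> c00"
  unfolding c00_def mem_Collect_eq delta_def by (rule finite_subset[of _ "{y}"]) auto

lemma c00_diff: "a \<in> c00 \<Longrightarrow> b \<in> c00 \<Longrightarrow> (\<lambda>x. a x - b x) \<in> c00"
  unfolding c00_def mem_Collect_eq by (rule finite_subset[of _ "{x. a x \<noteq> 0} \<union> {x. b x \<noteq> 0}"]) auto

lemma c00_scale: "a \<in> c00 \<Longrightarrow> (\<lambda>x. c * a x) \<in> c00"
  unfolding c00_def mem_Collect_eq by (rule finite_subset[of _ "{x. a x \<noteq> 0}"]) auto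

lemma op_T:
  assumes "is_operator D h" "c00 \<subseteq> D" "finite F"
  shows "h (T F \<xi>) = (\<lambda>x. \<Sum>y\<in>F. \<xi> y * h (delta y) x)"
proof -
  have g: "(\<lambda>x. \<xi> y * delta y x) \<in> D \<and> h (\<lambda>x. \<xi> y * delta y x) = (\<lambda>x. \<xi> y * h (delta y) x)" for y
    using op_basic(4)[OF assms(1) subsetD[OF assms(2) delta_c00[of y]], of "\<xi> y"] by auto
  show ?thesis unfolding T_def using op_sum[OF assms(1,3), of "\<lambda>y x. \<xi> y * delta y x"] g by simp
qed

lemma T_norm:
  assumes "\<xi> \<in> l2" "finite F"
  shows "l2norm (T F \<xi>) \<le> l2norm \<xi>"
proof -
  have "T F \<xi> \<in> l2 \<and> l2norm (T F \<xi>) \<le> l2norm \<xi>"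
  proof (rule l2_bound)
    fix A :: "'a set" assume A: "finite A"
    have "(\<Sum>x\<in>A. (cmod (T F \<xi> x))\<^sup>2) \<le> (\<Sum>x\<in>A. (cmod (\<xi> x))\<^sup>2)"
      by (rule sum_mono) (simp add: T_eq assms(2))
    also have "\<dots> \<le> (l2norm \<xi>)\<^sup>2" by (rule l2_fin_le[OF assms(1) A])
    finally show "(\<Sum>x\<in>A. (cmod (T F \<xi> x))\<^sup>2) \<le> (l2norm \<xi>)\<^sup>2" .
  qed (rule l2norm_nonneg)
  then show ?thesis by simp
qed

lemma T_lim:
  assumes "\<xi> \<in> l2"
  shows "((\<lambda>F. l2norm (\<lambda>x. T F \<xi> x - \<xi> x)) \<longlongrightarrow> 0) (finite_subsets_at_top UNIV)"
proof (rule order_tendstoI)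
  fix a :: real assume "a < 0"
  then show "\<forall>\<^sub>F F in finite_subsets_at_top UNIV. a < l2norm (\<lambda>x. T F \<xi> x - \<xi> x)"
    using l2norm_nonneg by (auto intro: order_less_le_trans)
next
  fix e :: real assume e: "0 < e"
  define q where "q = (\<lambda>x. (cmod (\<xi> x))\<^sup>2)"
  define S where "S = infsum q UNIV"
  have S: "S = (l2norm \<xi>)\<^sup>2" unfolding S_def q_def l2norm_def by (simp add: infsum_nonneg)
  have "(q has_sum S) UNIV" using assms unfolding S_def q_def l2_def by simp
  then have "(sum q \<longlongrightarrow> S) (finite_subsets_at_top UNIV)" by (simp add: has_sum_def)
  moreover have "(e/2)\<^sup>2 > 0" using e by simp
  ultimately have ev: "\<forall>\<^sub>F F in finite_subsets_at_top UNIV. dist (sum q F) S < (e/2)\<^sup>2"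
    by (rule tendstoD)
  have "\<forall>\<^sub>F F in finite_subsets_at_top UNIV. finite F"
    by (rule eventually_finite_subsets_at_top_weakI) simp
  with ev show "\<forall>\<^sub>F F in finite_subsets_at_top UNIV. l2norm (\<lambda>x. T F \<xi> x - \<xi> x) < e"
  proof (rule eventually_elim2)
    fix F :: "'a set" assume d: "dist (sum q F) S < (e/2)\<^sup>2" and F: "finite F"
    have "(\<lambda>x. T F \<xi> x - \<xi> x) \<in> l2 \<and> l2norm (\<lambda>x. T F \<xi> x - \<xi> x) \<le> e/2"
    proof (rule l2_bound)
      fix A :: "'a set" assume A: "finite A"
      have "(\<Sum>x\<in>A. (cmod (T F \<xi> x - \<xi> x))\<^sup>2) = (\<Sum>x\<in>A. if x \<in> F then 0 else q x)"
        by (rule sum.cong) (auto simp: T_eq F q_def)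
      also have "\<dots> = sum q (A - F)"
        by (simp add: sum.If_cases A Diff_eq)
      also have "\<dots> = sum q ((A - F) \<union> F) - sum q F"
      proof -
        have dj: "(A - F) \<inter> F = {}" by blast
        show ?thesis using sum.union_disjoint[of "A - F" F q, OF _ _ dj] A F by simp
      qed
      also have "sum q ((A - F) \<union> F) \<le> S"
        using l2_fin_le[OF assms, of "(A - F) \<union> F"] A F S unfolding q_def by simp
      finally show "(\<Sum>x\<in>A. (cmod (T F \<xi> x - \<xi> x))\<^sup>2) \<le> (e/2)\<^sup>2"
        using d by (simp add: dist_real_def)
    qed (use e in simp)
    then show "l2norm (\<lambda>x. T F \<xi> x - \<xi> x) < e" using e by simp
  qed
qed



lemma adm_basic:
  assumes "admissible D h"
  shows "is_operator D h" "closed_operator D h" "c00 \<subseteq> D"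
    "\<And>\<xi>. \<xi> \<in> D \<Longrightarrow> ((\<lambda>F. l2norm (\<lambda>x. h (T F \<xi>) x - h \<xi> x)) \<longlongrightarrow> 0) (finite_subsets_at_top UNIV)"
proof -
  show op: "is_operator D h" and "closed_operator D h" and c: "c00 \<subseteq> D"
    using assms unfolding admissible_def by auto
  fix \<xi> assume x: "\<xi> \<in> D"
  have lim: "((\<lambda>F. l2norm (\<lambda>x. (\<Sum>y\<in>F. \<xi> y * h (delta y) x) - h \<xi> x)) \<longlongrightarrow> 0) (finite_subsets_at_top UNIV)"
    using assms x unfolding admissible_def by auto
  have ev: "\<forall>\<^sub>F F in finite_subsets_at_top UNIV. l2norm (\<lambda>x. (\<Sum>y\<in>F. \<xi> y * h (delta y) x) - h \<xi> x)
      = l2norm (\<lambda>x. h (T F \<xi>) x - h \<xi> x)"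
    by (rule eventually_finite_subsets_at_top_weakI) (simp add: op_T[OF op c])
  show "((\<lambda>F. l2norm (\<lambda>x. h (T F \<xi>) x - h \<xi> x)) \<longlongrightarrow> 0) (finite_subsets_at_top UNIV)"
    by (rule Lim_transform_eventually[OF lim ev])
qed

lemma part_a:
  assumes ah: "admissible Dh h" and ak: "admissible Dk k"
    and \<xi>: "\<xi> \<in> Dh" "\<xi> \<in> Dk" "l2norm \<xi> \<le> 1"
    and M: "\<And>\<phi>. \<phi> \<in> c00 \<Longrightarrow> l2norm \<phi> \<le> 1 \<Longrightarrow> l2norm (\<lambda>x. h \<phi> x - k \<phi> x) \<le> M"
  shows "l2norm (\<lambda>x. h \<xi> x - k \<xi> x) \<le> M"
proof -
  note oh = adm_basic[OF ah] and ok = adm_basic[OF ak]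
  have xl2: "\<xi> \<in> l2" using op_basic(1)[OF oh(1)] \<xi> by auto
  let ?a = "\<lambda>F. l2norm (\<lambda>x. h (T F \<xi>) x - h \<xi> x)"
  let ?b = "\<lambda>F. l2norm (\<lambda>x. k (T F \<xi>) x - k \<xi> x)"
  have lim: "((\<lambda>F. ?a F + M + ?b F) \<longlongrightarrow> 0 + M + 0) (finite_subsets_at_top UNIV)"
    by (intro tendsto_intros oh(4) ok(4) \<xi>)
  have ev: "\<forall>\<^sub>F F in finite_subsets_at_top UNIV. l2norm (\<lambda>x. h \<xi> x - k \<xi> x) \<le> ?a F + M + ?b F"
  proof (rule eventually_finite_subsets_at_top_weakI)
    fix F :: "'a set" assume F: "finite F"
    have TD: "T F \<xi> \<in> Dh" "T F \<xi> \<in> Dk" using T_c00[OF F] oh(3) ok(3) by auto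
    have l: "h \<xi> \<in> l2" "k \<xi> \<in> l2" "h (T F \<xi>) \<in> l2" "k (T F \<xi>) \<in> l2"
      using op_basic(2)[OF oh(1)] op_basic(2)[OF ok(1)] TD \<xi> by auto
    have "l2norm (\<lambda>x. h \<xi> x - k \<xi> x) \<le> l2norm (\<lambda>x. h \<xi> x - h (T F \<xi>) x) + l2norm (\<lambda>x. h (T F \<xi>) x - k \<xi> x)"
      by (rule l2_tri) (use l in auto)
    also have "l2norm (\<lambda>x. h (T F \<xi>) x - k \<xi> x) \<le> l2norm (\<lambda>x. h (T F \<xi>) x - k (T F \<xi>) x) + l2norm (\<lambda>x. k (T F \<xi>) x - k \<xi> x)"
      by (rule l2_tri) (use l in auto)
    also have "l2norm (\<lambda>x. h (T F \<xi>) x - k (T F \<xi>) x) \<le> M"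
      using M[OF T_c00[OF F]] T_norm[OF xl2 F] \<xi>(3) by simp
    finally show "l2norm (\<lambda>x. h \<xi> x - k \<xi> x) \<le> ?a F + M + ?b F"
      by (simp add: l2norm_commute[of "h \<xi>"])
  qed
  have "l2norm (\<lambda>x. h \<xi> x - k \<xi> x) \<le> 0 + M + 0"
    by (rule tendsto_le[OF finite_subsets_at_top_neq_bot lim tendsto_const ev])
  then show ?thesis by simp
qed

lemma part_b:
  assumes ah: "admissible Dh h" and ak: "admissible Dk k"
    and M: "\<And>\<phi>. \<phi> \<in> c00 \<Longrightarrow> l2norm (\<lambda>x. h \<phi> x - k \<phi> x) \<le> M * l2norm \<phi>"
    and M0: "M \<ge> 0"
  shows "Dh \<subseteq> Dk"
proof
  fix \<xi> assume xh: "\<xi> \<in> Dh"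
  note oh = adm_basic[OF ah] and ok = adm_basic[OF ak]
  have xl2: "\<xi> \<in> l2" using op_basic(1)[OF oh(1)] xh by auto
  have hxl2: "h \<xi> \<in> l2" using op_basic(2)[OF oh(1)] xh by auto
  define e where "e = (\<lambda>n::nat. inverse (real (Suc n)))"
  have e0: "e n > 0" for n unfolding e_def by simp
  have emono: "m \<ge> n \<Longrightarrow> e m \<le> e n" for m n unfolding e_def by (simp add: le_imp_inverse_le)
  have elim: "e \<longlonglongrightarrow> 0" unfolding e_def by (rule LIMSEQ_inverse_real_of_nat)
  define P where "P = (\<lambda>n X. finite X \<and> (\<forall>Y. finite Y \<and> X \<subseteq> Y \<longrightarrow>
      l2norm (\<lambda>x. T Y \<xi> x - \<xi> x) < e n \<and> l2norm (\<lambda>x. h (T Y \<xi>) x - h \<xi> x) < e n))"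
  have "\<exists>X. P n X" for n
  proof -
    have "\<forall>\<^sub>F F in finite_subsets_at_top UNIV. l2norm (\<lambda>x. T F \<xi> x - \<xi> x) < e n"
      using T_lim[OF xl2] e0[of n] by (rule order_tendstoD)
    moreover have "\<forall>\<^sub>F F in finite_subsets_at_top UNIV. l2norm (\<lambda>x. h (T F \<xi>) x - h \<xi> x) < e n"
      using oh(4)[OF xh] e0[of n] by (rule order_tendstoD)
    ultimately have "\<forall>\<^sub>F F in finite_subsets_at_top UNIV. l2norm (\<lambda>x. T F \<xi> x - \<xi> x) < e n
        \<and> l2norm (\<lambda>x. h (T F \<xi>) x - h \<xi> x) < e n"
      by (rule eventually_conj)
    then obtain X where "finite X" "\<And>Y. finite Y \<and> X \<subseteq> Y \<and> Y \<subseteq> UNIV \<Longrightarrow>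
        l2norm (\<lambda>x. T Y \<xi> x - \<xi> x) < e n \<and> l2norm (\<lambda>x. h (T Y \<xi>) x - h \<xi> x) < e n"
      unfolding eventually_finite_subsets_at_top by blast
    then have "P n X" unfolding P_def by simp
    then show ?thesis by blast
  qed
  then have "\<forall>n. \<exists>X. P n X" by blast
  then have "\<exists>X. \<forall>n. P n (X n)" by (rule choice)
  then obtain X where XP: "\<And>n. P n (X n)" by blast
  have X1: "finite (X n)" for n using XP[of n] unfolding P_def by blast
  have X2: "l2norm (\<lambda>x. T Y \<xi> x - \<xi> x) < e n \<and> l2norm (\<lambda>x. h (T Y \<xi>) x - h \<xi> x) < e n"
    if "finite Y" "X n \<subseteq> Y" for n Y using XP[of n] that unfolding P_def by blast
  define G where "G = (\<lambda>n. \<Union>i\<le>n. X i)"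
  have Gf: "finite (G n)" for n unfolding G_def using X1 by auto
  have GX: "X n \<subseteq> G n" for n unfolding G_def by auto
  define s where "s = (\<lambda>n. T (G n) \<xi>)"
  have s1: "l2norm (\<lambda>x. s n x - \<xi> x) < e n" and s2: "l2norm (\<lambda>x. h (s n) x - h \<xi> x) < e n" for n
    using X2[OF Gf GX] unfolding s_def by auto
  have sc: "s n \<in> c00" for n unfolding s_def by (rule T_c00[OF Gf])
  have sh: "s n \<in> Dh" and sk: "s n \<in> Dk" for n using sc oh(3) ok(3) by auto
  have sl2: "s n \<in> l2" for n using sh op_basic(1)[OF oh(1)] by auto
  define g where "g = (\<lambda>n x. h (s n) x - k (s n) x)"
  have hsl2: "h (s n) \<in> l2" and ksl2: "k (s n) \<in> l2" for n
    using op_basic(2)[OF oh(1) sh] op_basic(2)[OF ok(1) sk] by auto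
  have gl2: "g n \<in> l2" for n unfolding g_def by (rule l2_diff[OF hsl2 ksl2])
  have gd: "l2norm (\<lambda>x. g m x - g n x) \<le> M * (e m + e n)" for m n
  proof -
    have dh: "h (\<lambda>x. s m x - s n x) = (\<lambda>x. h (s m) x - h (s n) x)"
      using op_diff[OF oh(1) sh[of m] sh[of n]] by blast
    have dk: "k (\<lambda>x. s m x - s n x) = (\<lambda>x. k (s m) x - k (s n) x)"
      using op_diff[OF ok(1) sk[of m] sk[of n]] by blast
    have "(\<lambda>x. g m x - g n x) = (\<lambda>x. h (\<lambda>x. s m x - s n x) x - k (\<lambda>x. s m x - s n x) x)"
      unfolding dh dk g_def by (simp add: algebra_simps)
    then have "l2norm (\<lambda>x. g m x - g n x) \<le> M * l2norm (\<lambda>x. s m x - s n x)"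
      using M[OF c00_diff[OF sc[of m] sc[of n]]] by simp
    also have "l2norm (\<lambda>x. s m x - s n x) \<le> l2norm (\<lambda>x. s m x - \<xi> x) + l2norm (\<lambda>x. \<xi> x - s n x)"
      by (rule l2_tri[OF sl2[of m] sl2[of n] xl2])
    also have "\<dots> \<le> e m + e n" using s1[of m] s1[of n] l2norm_commute[of "s n" \<xi>] by simp
    finally show ?thesis using M0 by (simp add: mult_left_mono)
  qed
  have "\<exists>\<eta>\<in>l2. (\<lambda>n. l2norm (\<lambda>x. g n x - \<eta> x)) \<longlonglongrightarrow> 0"
  proof (rule l2_complete[OF gl2])
    fix r :: real assume r: "r > 0"
    have "r / (2 * (M + 1)) > 0" using r M0 by simp
    then obtain N where N: "inverse (real (Suc N)) < r / (2 * (M + 1))"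
      using reals_Archimedean by blast
    show "\<exists>N. \<forall>m\<ge>N. \<forall>n\<ge>N. l2norm (\<lambda>x. g m x - g n x) < r"
    proof (intro exI[of _ N] allI impI)
      fix m n assume mn: "m \<ge> N" "n \<ge> N"
      have "e m + e n \<le> 2 * e N" using emono[OF mn(1)] emono[OF mn(2)] by simp
      also have "\<dots> < r / (M + 1)" using N unfolding e_def using M0 by (simp add: field_simps)
      finally have "(M + 1) * (e m + e n) < r" using M0 by (simp add: field_simps)
      moreover have "M * (e m + e n) \<le> (M + 1) * (e m + e n)"
        using e0[of m] e0[of n] by (simp add: mult_right_mono)
      ultimately show "l2norm (\<lambda>x. g m x - g n x) < r" using gd[of m n] by linarith
    qed
  qed
  then obtain \<eta> where \<eta>: "\<eta> \<in> l2" "(\<lambda>n. l2norm (\<lambda>x. g n x - \<eta> x)) \<longlonglongrightarrow> 0" by blast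
  have cl: "\<forall>s \<xi> \<eta>. (\<forall>n. s n \<in> Dk) \<and> \<xi> \<in> l2 \<and> \<eta> \<in> l2 \<and>
        (\<lambda>n. l2norm (\<lambda>x. s n x - \<xi> x)) \<longlonglongrightarrow> 0 \<and>
        (\<lambda>n. l2norm (\<lambda>x. k (s n) x - \<eta> x)) \<longlonglongrightarrow> 0 \<longrightarrow> \<xi> \<in> Dk \<and> k \<xi> = \<eta>"
    using ok(2) unfolding closed_operator_def by blast
  have t1: "(\<lambda>n. l2norm (\<lambda>x. s n x - \<xi> x)) \<longlonglongrightarrow> 0"
    by (rule tendsto_sandwich[OF _ _ tendsto_const elim]) (auto intro!: always_eventually simp: l2norm_nonneg less_imp_le[OF s1])
  have t2: "(\<lambda>n. l2norm (\<lambda>x. k (s n) x - (h \<xi> x - \<eta> x))) \<longlonglongrightarrow> 0"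
  proof (rule tendsto_sandwich[OF _ _ tendsto_const])
    show "(\<lambda>n. e n + l2norm (\<lambda>x. g n x - \<eta> x)) \<longlonglongrightarrow> 0"
      using tendsto_add[OF elim \<eta>(2)] by simp
    show "\<forall>\<^sub>F n in sequentially. 0 \<le> l2norm (\<lambda>x. k (s n) x - (h \<xi> x - \<eta> x))"
      by (simp add: l2norm_nonneg)
    show "\<forall>\<^sub>F n in sequentially. l2norm (\<lambda>x. k (s n) x - (h \<xi> x - \<eta> x)) \<le> e n + l2norm (\<lambda>x. g n x - \<eta> x)"
    proof (rule always_eventually, rule allI)
      fix n
      have d1: "(\<lambda>x. h (s n) x - h \<xi> x) \<in> l2" by (rule l2_diff[OF hsl2 hxl2])
      have d2: "(\<lambda>x. \<eta> x - g n x) \<in> l2" by (rule l2_diff[OF \<eta>(1) gl2])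
      have "(\<lambda>x. k (s n) x - (h \<xi> x - \<eta> x)) = (\<lambda>x. (h (s n) x - h \<xi> x) + (\<eta> x - g n x))"
        unfolding g_def by (simp add: algebra_simps)
      then have "l2norm (\<lambda>x. k (s n) x - (h \<xi> x - \<eta> x)) \<le>
          l2norm (\<lambda>x. h (s n) x - h \<xi> x) + l2norm (\<lambda>x. \<eta> x - g n x)"
        using l2_add[OF d1 d2] by simp
      then show "l2norm (\<lambda>x. k (s n) x - (h \<xi> x - \<eta> x)) \<le> e n + l2norm (\<lambda>x. g n x - \<eta> x)"
        using s2[of n] l2norm_commute[of \<eta> "g n"] by simp
    qed
  qed
  have "\<xi> \<in> Dk \<and> k \<xi> = (\<lambda>x. h \<xi> x - \<eta> x)"
    using cl[rule_format, of s \<xi> "\<lambda>x. h \<xi> x - \<eta> x"] sk xl2 l2_diff[OF hxl2 \<eta>(1)] t1 t2 by blast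
  then show "\<xi> \<in> Dk" by blast
qed


lemma homog:
  assumes ah: "admissible Dh h" and ak: "admissible Dk k"
    and M: "\<And>\<phi>. \<phi> \<in> c00 \<Longrightarrow> l2norm \<phi> \<le> 1 \<Longrightarrow> l2norm (\<lambda>x. h \<phi> x - k \<phi> x) \<le> M"
    and M0: "M \<ge> 0" and \<phi>: "\<phi> \<in> c00"
  shows "l2norm (\<lambda>x. h \<phi> x - k \<phi> x) \<le> M * l2norm \<phi>"
proof (rule field_le_epsilon)
  fix d :: real assume d: "d > 0"
  note oh = adm_basic[OF ah] and ok = adm_basic[OF ak]
  define t where "t = l2norm \<phi> + d / (M + 1)"
  have t0: "t > 0" unfolding t_def using d M0 l2norm_nonneg[of \<phi>] by (simp add: add_nonneg_pos)
  have ph: "\<phi> \<in> Dh" and pk: "\<phi> \<in> Dk" using \<phi> oh(3) ok(3) by auto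
  have pl2: "\<phi> \<in> l2" using ph op_basic(1)[OF oh(1)] by auto
  define c where "c = complex_of_real (inverse t)"
  have cm: "cmod c = inverse t" unfolding c_def using t0 by (simp add: norm_inverse)
  define \<psi> where "\<psi> = (\<lambda>x. c * \<phi> x)"
  have pc: "\<psi> \<in> c00" unfolding \<psi>_def by (rule c00_scale[OF \<phi>])
  have "l2norm \<psi> = inverse t * l2norm \<phi>" unfolding \<psi>_def using l2_scale[OF pl2, of c] cm by simp
  also have "\<dots> \<le> 1" using t0 d M0 unfolding t_def by (simp add: field_simps add_nonneg_pos)
  finally have "l2norm (\<lambda>x. h \<psi> x - k \<psi> x) \<le> M" using M[OF pc] by simp
  moreover have "(\<lambda>x. h \<psi> x - k \<psi> x) = (\<lambda>x. c * (h \<phi> x - k \<phi> x))"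
    unfolding \<psi>_def using op_basic(4)[OF oh(1) ph, of c] op_basic(4)[OF ok(1) pk, of c]
    by (simp add: algebra_simps)
  moreover have "(\<lambda>x. h \<phi> x - k \<phi> x) \<in> l2"
    by (rule l2_diff) (use op_basic(2)[OF oh(1) ph] op_basic(2)[OF ok(1) pk] in auto)
  ultimately have "inverse t * l2norm (\<lambda>x. h \<phi> x - k \<phi> x) \<le> M"
    using l2_scale[of "\<lambda>x. h \<phi> x - k \<phi> x" c] cm by simp
  then have "l2norm (\<lambda>x. h \<phi> x - k \<phi> x) \<le> M * t" using t0 by (simp add: field_simps)
  also have "M * t \<le> M * l2norm \<phi> + d"
  proof -
    have "M * (d / (M + 1)) \<le> d" using M0 d by (simp add: field_simps)
    then show ?thesis unfolding t_def by (simp add: distrib_left)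
  qed
  finally show "l2norm (\<lambda>x. h \<phi> x - k \<phi> x) \<le> M * l2norm \<phi> + d" .
qed

theorem proposition2p1p2:
  fixes Dh Dk :: "('a::metric_space \<Rightarrow> complex) set"
    and h k :: "('a \<Rightarrow> complex) \<Rightarrow> ('a \<Rightarrow> complex)"
  assumes "unif_locally_finite TYPE('a)"
    and "admissible Dh h" and "admissible Dk k"
  shows "opnorm (Dh \<inter> Dk) (\<lambda>\<xi> x. h \<xi> x - k \<xi> x) = opnorm c00 (\<lambda>\<xi> x. h \<xi> x - k \<xi> x)
         \<and> (opnorm c00 (\<lambda>\<xi> x. h \<xi> x - k \<xi> x) < \<infinity> \<longrightarrow> Dh = Dk)"
proof -
  note ah = assms(2) and ak = assms(3)
  note oh = adm_basic[OF ah] and ok = adm_basic[OF ak]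
  define N where "N = opnorm c00 (\<lambda>\<xi> x. h \<xi> x - k \<xi> x)"
  have Nup: "ereal (l2norm (\<lambda>x. h \<phi> x - k \<phi> x)) \<le> N" if "\<phi> \<in> c00" "l2norm \<phi> \<le> 1" for \<phi>
    unfolding N_def opnorm_def by (rule Sup_upper) (use that in auto)
  have z: "(\<lambda>x::'a. 0::complex) \<in> c00" unfolding c00_def by simp
  have "(\<lambda>x. h (\<lambda>x::'a. 0) x - k (\<lambda>x. 0) x) = (\<lambda>x. 0)"
    using op_zero[OF oh(1)] op_zero[OF ok(1)] by simp
  moreover have l0: "l2norm (\<lambda>x::'a. 0::complex) = 0" using l2_zero[where 'a='a] by blast
  ultimately have N0: "ereal 0 \<le> N" using Nup[OF z] by simp
  have bnd: "\<exists>M. M \<ge> 0 \<and> (\<forall>\<phi>. \<phi> \<in> c00 \<longrightarrow> l2norm \<phi> \<le> 1 \<longrightarrow> l2norm (\<lambda>x. h \<phi> x - k \<phi> x) \<le> M)"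
    if Nf: "N < \<infinity>"
  proof -
    obtain M where NM: "N = ereal M" using Nf N0 by (cases N) auto
    show ?thesis using Nup N0 unfolding NM by (intro exI[of _ M]) auto
  qed
  have a: "opnorm (Dh \<inter> Dk) (\<lambda>\<xi> x. h \<xi> x - k \<xi> x) = N"
  proof (rule antisym)
    show "opnorm (Dh \<inter> Dk) (\<lambda>\<xi> x. h \<xi> x - k \<xi> x) \<le> N"
      unfolding opnorm_def
    proof (rule Sup_least)
      fix z assume "z \<in> {ereal (l2norm (\<lambda>x. h \<xi> x - k \<xi> x)) |\<xi>. \<xi> \<in> Dh \<inter> Dk \<and> l2norm \<xi> \<le> 1}"
      then obtain \<xi> where x: "\<xi> \<in> Dh \<inter> Dk" "l2norm \<xi> \<le> 1" and zx: "z = ereal (l2norm (\<lambda>x. h \<xi> x - k \<xi> x))"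
        by auto
      show "z \<le> N"
      proof (cases "N < \<infinity>")
        case True
        then obtain M where M: "\<And>\<phi>. \<phi> \<in> c00 \<Longrightarrow> l2norm \<phi> \<le> 1 \<Longrightarrow> l2norm (\<lambda>x. h \<phi> x - k \<phi> x) \<le> M"
          and NM: "N = ereal M"
          using N0 Nup by (cases N) auto
        have "l2norm (\<lambda>x. h \<xi> x - k \<xi> x) \<le> M"
          by (rule part_a[OF ah ak _ _ x(2) M]) (use x in auto)
        then show ?thesis unfolding NM zx by simp
      next
        case False
        then show ?thesis by simp
      qed
    qed
    show "N \<le> opnorm (Dh \<inter> Dk) (\<lambda>\<xi> x. h \<xi> x - k \<xi> x)"
      unfolding N_def opnorm_def
      by (rule Sup_subset_mono) (use oh(3) ok(3) in blast)
  qed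
  have b: "Dh = Dk" if Nf2: "N < \<infinity>"
  proof -
    obtain M where M0: "M \<ge> 0" and M: "\<And>\<phi>. \<phi> \<in> c00 \<Longrightarrow> l2norm \<phi> \<le> 1 \<Longrightarrow> l2norm (\<lambda>x. h \<phi> x - k \<phi> x) \<le> M"
      using bnd[OF Nf2] by blast
    have H: "l2norm (\<lambda>x. h \<phi> x - k \<phi> x) \<le> M * l2norm \<phi>" if "\<phi> \<in> c00" for \<phi>
      by (rule homog[OF ah ak M M0 that])
    have H': "l2norm (\<lambda>x. k \<phi> x - h \<phi> x) \<le> M * l2norm \<phi>" if "\<phi> \<in> c00" for \<phi>
      using H[OF that] l2norm_commute[of "h \<phi>" "k \<phi>"] by simp
    show ?thesis using part_b[OF ah ak H M0] part_b[OF ak ah H' M0] by blast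
  qed
  show ?thesis using a b unfolding N_def by blast
qed

end
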